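(* Let $C\subset\mathbb{R}^d$ be a convex body and let $\Lambda\subset\mathbb{R}^d$ be a $d$-dimensional lattice. (1) There exists a convex body $K\supset C$ that is lattice complete with respect to $\Lambda$ and satisfies $\mathrm{diam}_\Lambda(K)=\mathrm{diam}_\Lambda(C)$. (2) There exists a convex body $L\subset C$ that is lattice reduced with respect to $\Lambda$ and satisfies $\mathrm{wdt}_\Lambda(L)=\mathrm{wdt}_\Lambda(C)$.
   Context: A convex body is a compact convex set with non-empty interior. A lattice $\Lambda\subset\mathbb{R}^d$ is a discrete subgroup spanning $\mathbb{R}^d$; $\Lambda^\star=\{y: x\cdot y\in\mathbb{Z}\ \forall x\in\Lambda\}$. $\mathrm{wdt}_\Lambda(C)=\min_{y\in\Lambda^\star\setminus\{0\}}\max_{a,b\in C}y\cdot(a-b)$. A segment $[a,b]$ is a lattice segment if $b-a$ is parallel to a nonzero vector of $\Lambda$; its lattice length is $|b-a|/|v|$ where $v$ generates $\Lambda\cap\mathrm{span}\{b-a\}$ and is a positive multiple of $b-a$; $\mathrm{diam}_\Lambda(C)$ is the maximum lattice length of a lattice segment in $C$. $C$ is lattice reduced if no convex body $C'\subsetneq C$ has the same lattice width; lattice complete if no convex body $C'\supsetneq C$ has the same lattice diameter. *)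

theory Defs
  imports "HOL-Analysis.Analysis"
begin

definition convex_body :: "'a::euclidean_space set \<Rightarrow> bool" where
  "convex_body C \<longleftrightarrow> compact C \<and> convex C \<and> interior C \<noteq> {}"

definition is_lattice :: "'a::euclidean_space set \<Rightarrow> bool" where
  "is_lattice L \<longleftrightarrow>
     0 \<in> L \<and> (\<forall>x\<in>L. \<forall>y\<in>L. x + y \<in> L) \<and> (\<forall>x\<in>L. - x \<in> L)
     \<and> (\<forall>x\<in>L. \<exists>e>0. \<forall>y\<in>L. y \<noteq> x \<longrightarrow> e \<le> dist y x)
     \<and> span L = UNIV"

definition dual_lattice :: "'a::euclidean_space set \<Rightarrow> 'a set" where
  "dual_lattice L = {y. \<forall>x\<in>L. x \<bullet> y \<in> \<int>}"

definition lattice_width :: "'a::euclidean_space set \<Rightarrow> 'a set \<Rightarrow> real" where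
  "lattice_width L C =
     Inf {Sup {y \<bullet> (a - b) | a b. a \<in> C \<and> b \<in> C} | y. y \<in> dual_lattice L - {0}}"

definition lattice_primitive :: "'a::euclidean_space set \<Rightarrow> 'a \<Rightarrow> bool" where
  "lattice_primitive L v \<longleftrightarrow> v \<in> L \<and> v \<noteq> 0 \<and>
     L \<inter> span {v} = range (\<lambda>k::int. of_int k *\<^sub>R v)"

definition lattice_diam :: "'a::euclidean_space set \<Rightarrow> 'a set \<Rightarrow> real" where
  "lattice_diam L C =
     Sup {norm (b - a) / norm v | a b v. a \<in> C \<and> b \<in> C \<and> lattice_primitive L v
            \<and> (\<exists>t>0. v = t *\<^sub>R (b - a))}"

definition lattice_reduced :: "'a::euclidean_space set \<Rightarrow> 'a set \<Rightarrow> bool" where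
  "lattice_reduced L C \<longleftrightarrow>
     \<not> (\<exists>C'. convex_body C' \<and> C' \<subset> C \<and> lattice_width L C' = lattice_width L C)"

definition lattice_complete :: "'a::euclidean_space set \<Rightarrow> 'a set \<Rightarrow> bool" where
  "lattice_complete L C \<longleftrightarrow>
     \<not> (\<exists>C'. convex_body C' \<and> C \<subset> C' \<and> lattice_diam L C' = lattice_diam L C)"

end

theory Submission
  imports Defs
begin


definition addgrp :: "'a::euclidean_space set \<Rightarrow> bool" where
  "addgrp G \<longleftrightarrow> 0 \<in> G \<and> (\<forall>x\<in>G. \<forall>y\<in>G. x + y \<in> G) \<and> (\<forall>x\<in>G. - x \<in> G)"

lemma addgrp_diff: "addgrp G \<Longrightarrow> x \<in> G \<Longrightarrow> y \<in> G \<Longrightarrow> x - y \<in> G"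
  unfolding addgrp_def by (metis diff_conv_add_uminus)

lemma addgrp_nat: "addgrp G \<Longrightarrow> x \<in> G \<Longrightarrow> of_nat n *\<^sub>R x \<in> G"
proof (induction n)
  case 0 then show ?case by (simp add: addgrp_def)
next
  case (Suc n) then show ?case by (simp add: addgrp_def algebra_simps)
qed

lemma addgrp_int: "addgrp G \<Longrightarrow> x \<in> G \<Longrightarrow> of_int k *\<^sub>R x \<in> G"
proof (cases "k \<ge> 0")
  case True
  assume "addgrp G" "x \<in> G"
  then show ?thesis using addgrp_nat[of G x "nat k"] True by simp
next
  case False
  assume a: "addgrp G" "x \<in> G"
  then have "of_nat (nat (-k)) *\<^sub>R x \<in> G" by (rule addgrp_nat)
  then have "- (of_nat (nat (-k)) *\<^sub>R x) \<in> G" using a by (simp add: addgrp_def)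
  then show ?thesis using False by simp
qed

lemma addgrp_sum: assumes "addgrp G" "finite B" "B \<subseteq> G" shows "(\<Sum>b\<in>B. of_int (f b) *\<^sub>R b) \<in> G"
  using assms(2,3)
proof (induction B rule: finite_induct)
  case empty then show ?case using assms(1) by (simp add: addgrp_def)
next
  case (insert x F)
  then show ?case using assms(1) addgrp_int[of G x "f x"] by (simp add: addgrp_def)
qed

lemma lattice_addgrp: "is_lattice L \<Longrightarrow> addgrp L"
  unfolding is_lattice_def addgrp_def by blast

lemma dirichlet:
  fixes G :: "'a::euclidean_space set"
  assumes G: "addgrp G" and B: "finite B" "B \<subseteq> G" "span B = UNIV"
    and e: "e > 0" and u: "u \<noteq> 0"
  shows "\<exists>v\<in>G. v \<noteq> 0 \<and> (\<exists>m::real. m > 0 \<and> norm (v - m *\<^sub>R u) < e)"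
proof -
  have "\<forall>x. \<exists>c. x = (\<Sum>b\<in>B. c b *\<^sub>R b)"
    using B span_finite[of B] by auto
  then obtain c where c: "\<And>x. x = (\<Sum>b\<in>B. c x b *\<^sub>R b)" by metis
  define lam where "lam x = (\<Sum>b\<in>B. of_int (floor (c x b)) *\<^sub>R b)" for x
  have lamG: "lam x \<in> G" for x unfolding lam_def by (rule addgrp_sum[OF G B(1,2)])
  define s where "s k = real k *\<^sub>R u - lam (real k *\<^sub>R u)" for k :: nat
  have sb: "norm (s k) \<le> (\<Sum>b\<in>B. norm b)" for k
  proof -
    let ?x = "real k *\<^sub>R u"
    have "s k = (\<Sum>b\<in>B. (c ?x b - of_int (floor (c ?x b))) *\<^sub>R b)"
      unfolding s_def lam_def by (subst c[of ?x]) (simp add: algebra_simps sum_subtractf)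
    also have "norm \<dots> \<le> (\<Sum>b\<in>B. norm ((c ?x b - of_int (floor (c ?x b))) *\<^sub>R b))"
      by (rule norm_sum)
    also have "\<dots> \<le> (\<Sum>b\<in>B. norm b)"
    proof (rule sum_mono)
      fix b
      have "\<bar>c ?x b - of_int (floor (c ?x b))\<bar> \<le> 1"
        by (smt (verit) of_int_floor_le real_of_int_floor_add_one_gt)
      then show "norm ((c ?x b - of_int (floor (c ?x b))) *\<^sub>R b) \<le> norm b"
        by (simp add: mult_left_le_one_le)
    qed
    finally show ?thesis .
  qed
  then have "bounded (range s)" unfolding bounded_iff by blast
  then obtain l r where r: "strict_mono r" "(s \<circ> r) \<longlonglongrightarrow> l"
    using bounded_imp_convergent_subsequence by blast
  define e' where "e' = min e (norm u)"
  have e': "e' > 0" using e u by (simp add: e'_def)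
  obtain N where N: "\<And>n. n \<ge> N \<Longrightarrow> dist ((s \<circ> r) n) l < e' / 2"
    using r(2) e' unfolding lim_sequentially by (meson half_gt_zero)
  define i where "i = r N"
  define j where "j = r (Suc N)"
  have ij: "i < j" using r(1) unfolding i_def j_def strict_mono_def by simp
  have d: "norm (s j - s i) < e'"
  proof -
    have "dist (s j) l < e' / 2" "dist (s i) l < e' / 2" using N[of N] N[of "Suc N"] by (auto simp: i_def j_def)
    then show ?thesis using dist_triangle_half_l[of "s j" l e' "s i"] by (simp add: dist_norm)
  qed
  define v where "v = lam (real j *\<^sub>R u) - lam (real i *\<^sub>R u)"
  define m where "m = real j - real i"
  have vG: "v \<in> G" unfolding v_def by (rule addgrp_diff[OF G lamG lamG])
  have m: "m \<ge> 1" using ij by (simp add: m_def)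
  have eq: "s j - s i = m *\<^sub>R u - v" by (simp add: s_def v_def m_def algebra_simps)
  have vm: "norm (v - m *\<^sub>R u) < e'" using d eq by (simp add: norm_minus_commute)
  have "v \<noteq> 0"
  proof
    assume "v = 0"
    then have "norm (m *\<^sub>R u) < norm u" using vm e'_def by simp
    moreover have "norm (m *\<^sub>R u) \<ge> norm u" using m by (simp add: mult_le_cancel_right1)
    ultimately show False by simp
  qed
  then show ?thesis using vG vm m e'_def by (intro bexI[of _ v]) (auto intro!: exI[of _ m])
qed

lemma lat_disc:
  assumes "is_lattice L" obtains e where "e > 0" "\<And>y. y \<in> L \<Longrightarrow> y \<noteq> 0 \<Longrightarrow> e \<le> norm y"
proof -
  have "0 \<in> L" using assms by (simp add: is_lattice_def)
  then obtain e where "e > 0" "\<forall>y\<in>L. y \<noteq> 0 \<longrightarrow> e \<le> dist y 0"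
    using assms unfolding is_lattice_def by blast
  then show ?thesis using that by auto
qed

lemma lat_basis:
  assumes "is_lattice L"
  obtains B where "finite B" "B \<subseteq> L" "independent B" "span B = UNIV"
proof -
  obtain B where B: "B \<subseteq> L" "independent B" "L \<subseteq> span B"
    by (rule basis_exists[of L])
  have "span L \<subseteq> span B" using B(3) by (simp add: span_minimal)
  then have "span B = UNIV" using assms by (auto simp: is_lattice_def)
  moreover have "finite B" using B(2) independent_bound by blast
  ultimately show ?thesis using that B by blast
qed

lemma lat_finite_bounded:
  assumes L: "is_lattice L" and S: "bounded S"
  shows "finite (L \<inter> S)"
proof (rule ccontr)
  assume inf: "\<not> finite (L \<inter> S)"
  obtain e where e: "e > 0" "\<And>y. y \<in> L \<Longrightarrow> y \<noteq> 0 \<Longrightarrow> e \<le> norm y" using lat_disc[OF L] by blast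
  have bnd: "bounded (L \<inter> S)" using S by (simp add: bounded_Int)
  obtain x where "x islimpt (L \<inter> S)"
    using bounded_infinite_imp_islimpt[OF subset_refl bnd inf] by blast
  then have inf2: "infinite (L \<inter> S \<inter> ball x (e/2))" using e(1) by (simp add: islimpt_eq_infinite_ball)
  then obtain a where a: "a \<in> L \<inter> S \<inter> ball x (e/2)"
    using infinite_imp_nonempty by blast
  have "infinite (L \<inter> S \<inter> ball x (e/2) - {a})" using inf2 by simp
  then obtain b where b: "b \<in> L \<inter> S \<inter> ball x (e/2) - {a}"
    using infinite_imp_nonempty by blast
  have ab: "a \<in> L \<inter> S \<inter> ball x (e/2)" "b \<in> L \<inter> S \<inter> ball x (e/2)" "a \<noteq> b" using a b by auto
  have "a - b \<in> L" using ab addgrp_diff[OF lattice_addgrp[OF L]] by auto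
  then have "e \<le> norm (a - b)" using e ab by auto
  moreover have "norm (a - b) < e" using ab dist_triangle_half_l[of a x e b]
    by (auto simp: dist_norm norm_minus_commute)
  ultimately show False by simp
qed

lemma dual_addgrp: "addgrp (dual_lattice L)"
  unfolding addgrp_def dual_lattice_def by (auto simp: inner_add_right)

lemma dual_basis_exists:
  fixes B :: "'a::euclidean_space set"
  assumes B: "finite B" "independent B" "span B = UNIV"
  obtains y where "\<And>b b'. b \<in> B \<Longrightarrow> b' \<in> B \<Longrightarrow> b' \<bullet> y b = (if b' = b then 1 else 0)"
proof -
  have "\<exists>z. \<forall>b'\<in>B. b' \<bullet> z = (if b' = b then 1 else 0)" if b: "b \<in> B" for b
  proof -
    have "b \<notin> span (B - {b})" using B(2) b by (meson dependent_def)
    then have "span (B - {b}) \<noteq> UNIV" by auto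
    then obtain z where z: "z \<noteq> 0" "\<And>x. x \<in> span (B - {b}) \<Longrightarrow> z \<bullet> x = 0"
      using span_not_UNIV_orthogonal by blast
    have zb: "z \<bullet> b \<noteq> 0"
    proof
      assume zb0: "z \<bullet> b = 0"
      have "orthogonal x z" if "x \<in> B" for x
        using z(2)[of x] zb0 that span_base[of x "B - {b}"]
        by (cases "x = b") (auto simp: orthogonal_def inner_commute)
      then have "orthogonal z z" using orthogonal_to_span[of z B z] B(3) by (auto simp: orthogonal_commute)
      then show False using z(1) by (simp add: orthogonal_def)
    qed
    define y where "y = (1 / (z \<bullet> b)) *\<^sub>R z"
    have "b' \<bullet> y = (if b' = b then 1 else 0)" if "b' \<in> B" for b'
    proof (cases "b' = b")
      case True then show ?thesis using zb by (simp add: y_def inner_commute)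
    next
      case False
      then have "z \<bullet> b' = 0" using z(2) that span_base[of b' "B - {b}"] by auto
      then show ?thesis using False by (simp add: y_def inner_commute)
    qed
    then show ?thesis by blast
  qed
  then obtain y where "\<And>b. b \<in> B \<Longrightarrow> \<forall>b'\<in>B. b' \<bullet> y b = (if b' = b then 1 else 0)" by metis
  then show ?thesis using that by blast
qed

lemma comb_dot:
  assumes "finite B" "b \<in> B" "\<And>b'. b' \<in> B \<Longrightarrow> b' \<bullet> y = (if b' = b then 1 else 0)"
  shows "(\<Sum>b'\<in>B. f b' *\<^sub>R b') \<bullet> y = f b"
proof -
  have "(\<Sum>b'\<in>B. f b' *\<^sub>R b') \<bullet> y = (\<Sum>b'\<in>B. f b' * (b' \<bullet> y))"
    by (simp add: inner_sum_left)
  also have "\<dots> = (\<Sum>b'\<in>B. if b' = b then f b' else 0)"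
    by (rule sum.cong) (auto simp: assms(3))
  also have "\<dots> = f b" using assms(1,2) by simp
  finally show ?thesis .
qed

lemma lat_multiple_in_comb:
  assumes L: "is_lattice L" and B: "finite B" "B \<subseteq> L" "span B = UNIV"
  obtains N :: nat where "N > 0" "\<And>x. x \<in> L \<Longrightarrow> \<exists>n. real N *\<^sub>R x = (\<Sum>b\<in>B. of_int (n b) *\<^sub>R b)"
proof -
  have G: "addgrp L" using L by (rule lattice_addgrp)
  have "\<forall>x. \<exists>c. x = (\<Sum>b\<in>B. c b *\<^sub>R b)"
    using B span_finite[of B] by auto
  then obtain c where c: "\<And>x. x = (\<Sum>b\<in>B. c x b *\<^sub>R b)" by metis
  define lam where "lam x = (\<Sum>b\<in>B. of_int (floor (c x b)) *\<^sub>R b)" for x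
  define rho where "rho x = x - lam x" for x
  define R where "R = (\<Sum>b\<in>B. norm b)"
  have lamL: "lam x \<in> L" for x unfolding lam_def by (rule addgrp_sum[OF G B(1,2)])
  have rhoL: "rho x \<in> L" if "x \<in> L" for x unfolding rho_def by (rule addgrp_diff[OF G that lamL])
  have rhob: "norm (rho x) \<le> R" for x
  proof -
    have "rho x = (\<Sum>b\<in>B. (c x b - of_int (floor (c x b))) *\<^sub>R b)"
      unfolding rho_def lam_def by (subst c[of x]) (simp add: algebra_simps sum_subtractf)
    also have "norm \<dots> \<le> (\<Sum>b\<in>B. norm ((c x b - of_int (floor (c x b))) *\<^sub>R b))"
      by (rule norm_sum)
    also have "\<dots> \<le> (\<Sum>b\<in>B. norm b)"
    proof (rule sum_mono)
      fix b
      have "\<bar>c x b - of_int (floor (c x b))\<bar> \<le> 1"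
        by (smt (verit) of_int_floor_le real_of_int_floor_add_one_gt)
      then show "norm ((c x b - of_int (floor (c x b))) *\<^sub>R b) \<le> norm b"
        by (simp add: mult_left_le_one_le)
    qed
    finally show ?thesis by (simp add: R_def)
  qed
  define F where "F = L \<inter> cball 0 R"
  have finF: "finite F" unfolding F_def by (rule lat_finite_bounded[OF L bounded_cball])
  define N where "N = (fact (card F) :: nat)"
  have "\<exists>n. real N *\<^sub>R x = (\<Sum>b\<in>B. of_int (n b) *\<^sub>R b)" if x: "x \<in> L" for x
  proof -
    define f where "f k = rho (real k *\<^sub>R x)" for k :: nat
    have fF: "f ` {0..card F} \<subseteq> F"
      using rhoL rhob addgrp_nat[OF G x] by (auto simp: f_def F_def)
    have "\<not> inj_on f {0..card F}"
    proof
      assume "inj_on f {0..card F}"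
      then have "card {0..card F} \<le> card F" using card_inj_on_le[OF _ fF finF] by blast
      then show False by simp
    qed
    then obtain k1 k2 where k: "k1 \<in> {0..card F}" "k2 \<in> {0..card F}" "k1 \<noteq> k2" "f k1 = f k2"
      unfolding inj_on_def by blast
    have "\<exists>k1 k2. k2 < k1 \<and> k1 \<le> card F \<and> f k1 = f k2"
      using k by (metis atLeastAtMost_iff linorder_neqE_nat)
    then obtain a b where ab: "b < a" "a \<le> card F" "f a = f b" by blast
    have eq: "real (a - b) *\<^sub>R x = (\<Sum>b'\<in>B. of_int (floor (c (real a *\<^sub>R x) b') - floor (c (real b *\<^sub>R x) b')) *\<^sub>R b')"
    proof -
      have "real a *\<^sub>R x - lam (real a *\<^sub>R x) = real b *\<^sub>R x - lam (real b *\<^sub>R x)"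
        using ab(3) by (simp add: f_def rho_def)
      then have "real a *\<^sub>R x - real b *\<^sub>R x = lam (real a *\<^sub>R x) - lam (real b *\<^sub>R x)"
        by (simp add: algebra_simps)
      then show ?thesis using ab(1)
        by (simp add: lam_def sum_subtractf algebra_simps of_nat_diff scaleR_diff_left)
    qed
    have "(a - b) dvd N" unfolding N_def using ab by (intro dvd_fact) auto
    then obtain q where q: "N = (a - b) * q" by blast
    have "real N *\<^sub>R x = real q *\<^sub>R (real (a - b) *\<^sub>R x)" by (simp add: q)
    also have "\<dots> = (\<Sum>b'\<in>B. of_int (int q * (floor (c (real a *\<^sub>R x) b') - floor (c (real b *\<^sub>R x) b'))) *\<^sub>R b')"
      by (subst eq) (simp add: scaleR_sum_right)
    finally have eqN: "real N *\<^sub>R x = (\<Sum>b'\<in>B. of_int (int q * (floor (c (real a *\<^sub>R x) b') - floor (c (real b *\<^sub>R x) b'))) *\<^sub>R b')" .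
    show ?thesis by (rule exI[of _ "\<lambda>b'. int q * (floor (c (real a *\<^sub>R x) b') - floor (c (real b *\<^sub>R x) b'))"]) (rule eqN)
  qed
  moreover have "N > 0" by (simp add: N_def)
  ultimately show ?thesis using that by blast
qed

lemma dual_spanning:
  assumes L: "is_lattice L"
  obtains B' where "finite B'" "B' \<subseteq> dual_lattice L" "span B' = UNIV"
proof -
  obtain B where B: "finite B" "B \<subseteq> L" "independent B" "span B = UNIV" using lat_basis[OF L] by blast
  obtain y where y: "\<And>b b'. b \<in> B \<Longrightarrow> b' \<in> B \<Longrightarrow> b' \<bullet> y b = (if b' = b then 1 else 0)"
    using dual_basis_exists[OF B(1,3,4)] by blast
  obtain N :: nat where N: "N > 0" "\<And>x. x \<in> L \<Longrightarrow> \<exists>n. real N *\<^sub>R x = (\<Sum>b\<in>B. of_int (n b) *\<^sub>R b)"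
    using lat_multiple_in_comb[OF L B(1,2,4)] by blast
  define B' where "B' = (\<lambda>b. real N *\<^sub>R y b) ` B"
  have "B' \<subseteq> dual_lattice L"
  proof
    fix w assume "w \<in> B'"
    then obtain b where b: "b \<in> B" "w = real N *\<^sub>R y b" by (auto simp: B'_def)
    have "x \<bullet> w \<in> \<int>" if xL: "x \<in> L" for x
    proof -
      obtain n where n: "real N *\<^sub>R x = (\<Sum>b\<in>B. of_int (n b) *\<^sub>R b)" using N(2)[OF xL] by blast
      have "x \<bullet> w = (real N *\<^sub>R x) \<bullet> y b" by (simp add: b(2))
      also have "\<dots> = of_int (n b)" unfolding n
        by (rule comb_dot[OF B(1) b(1)]) (simp add: y b(1))
      finally show ?thesis by simp
    qed
    then show "w \<in> dual_lattice L" by (simp add: dual_lattice_def)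
  qed
  moreover have "span B' = UNIV"
  proof (rule ccontr)
    assume "span B' \<noteq> UNIV"
    then obtain z where z: "z \<noteq> 0" "\<And>x. x \<in> span B' \<Longrightarrow> z \<bullet> x = 0"
      using span_not_UNIV_orthogonal by blast
    obtain cz where cz: "z = (\<Sum>b\<in>B. cz b *\<^sub>R b)" using B(1,4) span_finite[of B] by auto
    have "cz b = 0" if b: "b \<in> B" for b
    proof -
      have "real N *\<^sub>R y b \<in> B'" unfolding B'_def using b by (rule imageI)
      then have "z \<bullet> (real N *\<^sub>R y b) = 0" using z(2) span_base by blast
      then have "z \<bullet> y b = 0" using N(1) by simp
      moreover have "z \<bullet> y b = cz b" unfolding cz by (rule comb_dot[OF B(1) b]) (simp add: y b)
      ultimately show ?thesis by simp
    qed
    then have "z = 0" unfolding cz by simp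
    then show False using z(1) by simp
  qed
  moreover have "finite B'" using B(1) by (simp add: B'_def)
  ultimately show ?thesis using that by blast
qed

lemma primitive_exists:
  assumes L: "is_lattice L" and v: "v \<in> L" "v \<noteq> 0"
  obtains p and k :: int where "lattice_primitive L p" "k \<ge> 1" "v = of_int k *\<^sub>R p"
proof -
  have G: "addgrp L" using L by (rule lattice_addgrp)
  obtain e where e: "e > 0" "\<And>y. y \<in> L \<Longrightarrow> y \<noteq> 0 \<Longrightarrow> e \<le> norm y" using lat_disc[OF L] by blast
  define T where "T = {s::real. s > 0 \<and> s *\<^sub>R v \<in> L}"
  define d where "d = e / norm v"
  have d: "d > 0" using e v by (simp add: d_def)
  have Tlow: "d \<le> s" if "s \<in> T" for s
  proof -
    have "e \<le> norm (s *\<^sub>R v)" using e(2)[of "s *\<^sub>R v"] that v(2) by (auto simp: T_def)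
    then have "e \<le> s * norm v" using that by (simp add: T_def)
    then show ?thesis using v(2) by (simp add: d_def divide_le_eq)
  qed
  have T1: "1 \<in> T" using v by (simp add: T_def)
  have Tne: "T \<noteq> {}" using T1 by blast
  have bdd: "bdd_below T" using Tlow by (auto simp: bdd_below_def)
  define s0 where "s0 = Inf T"
  have s0low: "s0 \<le> s" if "s \<in> T" for s using cInf_lower[OF that bdd] by (simp add: s0_def)
  have s0d: "d \<le> s0" unfolding s0_def using Tne Tlow by (rule cInf_greatest)
  have s0T: "s0 \<in> T"
  proof (rule ccontr)
    assume nT: "s0 \<notin> T"
    obtain s1 where s1: "s1 \<in> T" "s1 < s0 + d"
      using cInf_lessD[OF Tne, of "s0 + d"] d by (auto simp: s0_def)
    have "s0 < s1" using s0low[OF s1(1)] nT s1(1) by (cases "s0 = s1") auto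
    then obtain s2 where s2: "s2 \<in> T" "s2 < s1" using cInf_lessD[OF Tne, of s1] by (auto simp: s0_def)
    have "s0 \<le> s2" using s0low s2 by blast
    have inL: "(s1 - s2) *\<^sub>R v \<in> L"
      using addgrp_diff[OF G, of "s1 *\<^sub>R v" "s2 *\<^sub>R v"] s1 s2 by (simp add: T_def scaleR_diff_left)
    have "(s1 - s2) *\<^sub>R v \<noteq> 0" using s2 v by simp
    then have "e \<le> (s1 - s2) * norm v" using e(2)[OF inL] s2 by simp
    moreover have "(s1 - s2) * norm v < d * norm v"
      using s1 \<open>s0 \<le> s2\<close> v(2) by (intro mult_strict_right_mono) auto
    moreover have "d * norm v = e" using v(2) by (simp add: d_def)
    ultimately show False by simp
  qed
  have s0pos: "s0 > 0" using s0d d by simp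
  define p where "p = s0 *\<^sub>R v"
  have pL: "p \<in> L" using s0T by (simp add: T_def p_def)
  have p0: "p \<noteq> 0" using s0pos v by (simp add: p_def)
  have span_eq: "L \<inter> span {p} = range (\<lambda>k::int. of_int k *\<^sub>R p)"
  proof
    show "L \<inter> span {p} \<subseteq> range (\<lambda>k::int. of_int k *\<^sub>R p)"
    proof
      fix x assume x: "x \<in> L \<inter> span {p}"
      then obtain t where t: "x = t *\<^sub>R p" by (auto simp: span_singleton)
      define q where "q = floor t"
      define f where "f = t - of_int q"
      have f01: "0 \<le> f" "f < 1" unfolding f_def q_def by linarith+
      have "f *\<^sub>R p \<in> L"
      proof -
        have "x - of_int q *\<^sub>R p \<in> L" using addgrp_diff[OF G _ addgrp_int[OF G pL]] x by blast
        then show ?thesis by (simp add: t f_def scaleR_diff_left)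
      qed
      have "f = 0"
      proof (rule ccontr)
        assume "f \<noteq> 0"
        then have "f * s0 \<in> T" using \<open>f *\<^sub>R p \<in> L\<close> f01 s0pos by (simp add: T_def p_def)
        then have "s0 \<le> f * s0" by (rule s0low)
        moreover have "f * s0 < s0" using f01 s0pos by simp
        ultimately show False by simp
      qed
      then have "x = of_int q *\<^sub>R p" by (simp add: t f_def)
      then show "x \<in> range (\<lambda>k::int. of_int k *\<^sub>R p)" by blast
    qed
  next
    show "range (\<lambda>k::int. of_int k *\<^sub>R p) \<subseteq> L \<inter> span {p}"
      using addgrp_int[OF G pL] by (auto simp: span_singleton)
  qed
  have prim: "lattice_primitive L p" using pL p0 span_eq by (simp add: lattice_primitive_def)
  have "v \<in> L \<inter> span {p}"
  proof -
    have "v = (1 / s0) *\<^sub>R p" using s0pos by (simp add: p_def)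
    then show ?thesis using v(1) by (auto simp: span_singleton)
  qed
  then obtain k :: int where k: "v = of_int k *\<^sub>R p" using span_eq by auto
  then have "(of_int k * s0 - 1) *\<^sub>R v = 0" by (simp add: p_def algebra_simps)
  then have "of_int k * s0 = 1" using v(2) by simp
  then have "k \<ge> 1" using s0pos
    by (smt (verit, ccfv_threshold) mult_nonpos_nonneg of_int_le_0_iff of_int_less_1_iff)
  then show ?thesis using that prim k by blast
qed

definition dset :: "'a::euclidean_space set \<Rightarrow> 'a set \<Rightarrow> real set" where
  "dset L K = {norm (b - a) / norm v | a b v. a \<in> K \<and> b \<in> K \<and> lattice_primitive L v
            \<and> (\<exists>t>0. v = t *\<^sub>R (b - a))}"

lemma diam_dset: "lattice_diam L K = Sup (dset L K)"
  by (simp add: lattice_diam_def dset_def)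

lemma dsetI: "a \<in> K \<Longrightarrow> b \<in> K \<Longrightarrow> lattice_primitive L v \<Longrightarrow> t > 0 \<Longrightarrow> v = t *\<^sub>R (b - a)
   \<Longrightarrow> norm (b - a) / norm v \<in> dset L K"
  unfolding dset_def by blast

lemma dset_nonneg: "q \<in> dset L K \<Longrightarrow> 0 \<le> q"
  unfolding dset_def by auto

lemma dset_bdd:
  assumes L: "is_lattice L" and K: "bounded K"
  shows "bdd_above (dset L K)"
proof -
  obtain e where e: "e > 0" "\<And>y. y \<in> L \<Longrightarrow> y \<noteq> 0 \<Longrightarrow> e \<le> norm y" using lat_disc[OF L] by blast
  obtain R where R: "\<And>x. x \<in> K \<Longrightarrow> norm x \<le> R" using K bounded_iff by blast
  have "q \<le> 2 * R / e" if qd: "q \<in> dset L K" for q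
  proof -
    obtain a b v where q: "q = norm (b - a) / norm v" "a \<in> K" "b \<in> K" "lattice_primitive L v"
      using qd unfolding dset_def by blast
    have v: "e \<le> norm v" using e(2)[of v] q(4) by (simp add: lattice_primitive_def)
    have nba: "norm (b - a) \<le> 2 * R" using R[OF q(2)] R[OF q(3)] norm_triangle_ineq4[of b a] by simp
    have "norm (b - a) / norm v \<le> norm (b - a) / e"
      using v e(1) by (intro divide_left_mono) (auto intro!: mult_pos_pos)
    also have "\<dots> \<le> 2 * R / e" using nba e(1) by (intro divide_right_mono) auto
    finally show ?thesis using q(1) by simp
  qed
  then show ?thesis by (auto simp: bdd_above_def)
qed

lemma lat_nonzero:
  assumes L: "is_lattice L" obtains v where "v \<in> L" "v \<noteq> 0"
proof -
  have "span L = UNIV" using L by (simp add: is_lattice_def)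
  obtain i :: 'a where i: "i \<in> Basis" using nonempty_Basis by blast
  have "\<not> L \<subseteq> {0}"
  proof
    assume "L \<subseteq> {0}"
    then have "span L \<subseteq> span {0}" by (rule span_mono)
    then have "i \<in> span {0}" using \<open>span L = UNIV\<close> by auto
    then show False using i by (simp add: span_empty nonzero_Basis) 
  qed
  then show ?thesis using that by blast
qed

lemma dset_ne:
  assumes L: "is_lattice L" and K: "cball c r \<subseteq> K" "r > 0"
  shows "dset L K \<noteq> {}"
proof -
  obtain v where v: "v \<in> L" "v \<noteq> 0" using lat_nonzero[OF L] by blast
  obtain p and k :: int where p: "lattice_primitive L p" using primitive_exists[OF L v] by blast
  have p0: "p \<noteq> 0" using p by (simp add: lattice_primitive_def)
  define b where "b = c + (r / norm p) *\<^sub>R p"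
  have bK: "b \<in> K" using K p0 by (auto simp: b_def dist_norm intro!: subsetD[OF K(1)])
  have cK: "c \<in> K" using K by auto
  have "p = (norm p / r) *\<^sub>R (b - c)" using K(2) p0 by (simp add: b_def)
  then have "norm (b - c) / norm p \<in> dset L K"
    using K(2) p0 by (intro dsetI[OF cK bK p, of "norm p / r"]) auto
  then show ?thesis by blast
qed

lemma diam_mono:
  assumes L: "is_lattice L" and "K \<subseteq> K'" "dset L K \<noteq> {}" "bounded K'"
  shows "lattice_diam L K \<le> lattice_diam L K'"
  unfolding diam_dset
  by (rule cSup_subset_mono[OF assms(3) dset_bdd[OF L assms(4)]]) (use assms(2) in \<open>auto simp: dset_def\<close>)

lemma chain_bounded:
  assumes L: "is_lattice L" and r: "r > 0" and D: "D \<ge> 0"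
    and F: "\<And>K. K \<in> \<K> \<Longrightarrow> convex K \<and> cball c r \<subseteq> K \<and> bounded K \<and> lattice_diam L K \<le> D"
  shows "bounded (\<Union>\<K>)"
proof (rule ccontr)
  assume nb: "\<not> bounded (\<Union>\<K>)"
  have "\<exists>x\<in>\<Union>\<K>. real n + 1 \<le> norm (x - c)" for n :: nat
  proof (rule ccontr)
    assume nx: "\<not> (\<exists>x\<in>\<Union>\<K>. real n + 1 \<le> norm (x - c))"
    have "\<forall>x\<in>\<Union>\<K>. norm x \<le> norm c + real n + 1"
    proof
      fix x assume xU: "x \<in> \<Union>\<K>"
      have "\<not> real n + 1 \<le> norm (x - c)" using nx xU by blast
      then have "norm (x - c) < real n + 1" by linarith
      moreover have "norm x \<le> norm c + norm (x - c)" using norm_triangle_ineq[of c "x - c"] by simp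
      ultimately show "norm x \<le> norm c + real n + 1" by simp
    qed
    then have "bounded (\<Union>\<K>)" unfolding bounded_iff by (intro exI)
    then show False using nb by simp
  qed
  then have "\<forall>n. \<exists>x. x \<in> \<Union>\<K> \<and> real n + 1 \<le> norm (x - c)" by blast
  then obtain x where x0: "\<forall>n. x n \<in> \<Union>\<K> \<and> real n + 1 \<le> norm (x n - c)"
    by (rule choice[THEN exE])
  have x: "\<And>n. x n \<in> \<Union>\<K>" "\<And>n. real n + 1 \<le> norm (x n - c)" using x0 by auto
  define u where "u n = (1 / norm (x n - c)) *\<^sub>R (x n - c)" for n
  have xn0: "norm (x n - c) > 0" for n using x(2)[of n] by linarith
  have un: "\<forall>n. u n \<in> sphere 0 1"
  proof
    fix n
    have "norm (u n) = 1" using xn0[of n] by (simp add: u_def)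
    then show "u n \<in> sphere 0 1" by simp
  qed
  have sc: "seq_compact (sphere (0::'a) 1)" by (rule compact_imp_seq_compact[OF compact_sphere])
  obtain u0 \<rho> where u0: "u0 \<in> sphere 0 1" "strict_mono \<rho>" "(u \<circ> \<rho>) \<longlonglongrightarrow> u0"
    using seq_compactE[OF sc un] by metis
  have "norm u0 = 1" using u0(1) by simp
  then have u00: "u0 \<noteq> 0" by (metis norm_zero zero_neq_one)
  obtain B0 where B0: "finite B0" "B0 \<subseteq> L" "independent B0" "span B0 = UNIV" by (rule lat_basis[OF L])
  have B: "finite B0" "B0 \<subseteq> L" "span B0 = UNIV" using B0 by simp_all
  define T where "T = D + 1"
  have T: "T > 0" using D by (simp add: T_def)
  define \<epsilon> where "\<epsilon> = r / (2 * T)"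
  have \<epsilon>: "\<epsilon> > 0" using r T by (simp add: \<epsilon>_def)
  have "\<exists>v\<in>L. v \<noteq> 0 \<and> (\<exists>m::real. m > 0 \<and> norm (v - m *\<^sub>R u0) < \<epsilon>)"
    by (rule dirichlet[OF lattice_addgrp[OF L] B \<epsilon> u00])
  then obtain v m where v: "v \<in> L" "v \<noteq> 0" "m > 0" "norm (v - m *\<^sub>R u0) < \<epsilon>"
    by blast
  obtain N where N: "\<And>n. n \<ge> N \<Longrightarrow> dist ((u \<circ> \<rho>) n) u0 < \<epsilon> / m"
  proof -
    have "\<epsilon> / m > 0" using \<epsilon> v(3) by simp
    then show ?thesis using u0(3) that unfolding lim_sequentially by blast
  qed
  define n0 where "n0 = max N (nat \<lceil>2 * m * T\<rceil>)"
  define j where "j = \<rho> n0"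
  have jn: "n0 \<le> j" unfolding j_def by (rule seq_suble[OF u0(2)])
  have "dist ((u \<circ> \<rho>) n0) u0 < \<epsilon> / m" by (rule N) (simp add: n0_def)
  then have du: "norm (u j - u0) < \<epsilon> / m" by (simp add: j_def dist_norm)
  define X where "X = norm (x j - c)"
  have X: "X \<ge> 2 * m * T"
  proof -
    have "2 * m * T \<le> real (nat \<lceil>2 * m * T\<rceil>)" by linarith
    also have "\<dots> \<le> real j" using jn by (simp add: n0_def)
    also have "\<dots> \<le> X" using x(2)[of j] by (simp add: X_def)
    finally show ?thesis .
  qed
  have "2 * m * T > 0" using v(3) T by simp
  then have Xpos: "X > 0" using X by linarith
  obtain K where K: "K \<in> \<K>" "x j \<in> K" using x(1)[of j] by blast
  have Kp: "convex K" "cball c r \<subseteq> K" "bounded K" "lattice_diam L K \<le> D" using F[OF K(1)] by simp_all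
  define w where "w = v - m *\<^sub>R u j"
  have w: "norm w < r / T"
  proof -
    have "w = (v - m *\<^sub>R u0) + m *\<^sub>R (u0 - u j)" by (simp add: w_def algebra_simps)
    then have "norm w \<le> norm (v - m *\<^sub>R u0) + m * norm (u0 - u j)"
      using norm_triangle_ineq[of "v - m *\<^sub>R u0" "m *\<^sub>R (u0 - u j)"] v(3) by simp
    also have "m * norm (u0 - u j) < \<epsilon>" using du v(3) by (simp add: norm_minus_commute field_simps)
    finally show ?thesis using v(4) T by (simp add: \<epsilon>_def field_simps)
  qed
  define a where "a = c - (T / 2) *\<^sub>R w"
  define b where "b = a + T *\<^sub>R v"
  have aK: "a \<in> K"
  proof -
    have "norm (a - c) = T / 2 * norm w" using T by (simp add: a_def)
    also have "\<dots> \<le> r" using w T r by (simp add: field_simps)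
    finally show ?thesis using Kp(2) by (auto simp: dist_norm norm_minus_commute)
  qed
  define lm where "lm = T * m / X"
  have lam: "0 < lm" "lm \<le> 1 / 2" using T v(3) Xpos X by (auto simp: lm_def field_simps)
  define c2 where "c2 = c + (T / (2 * (1 - lm))) *\<^sub>R w"
  have c2K: "c2 \<in> K"
  proof -
    have "norm (c2 - c) = T / (2 * (1 - lm)) * norm w" using T lam by (simp add: c2_def)
    also have "\<dots> \<le> T * norm w"
    proof -
      have "T / (2 * (1 - lm)) \<le> T" using lam T by (simp add: field_simps)
      then show ?thesis by (rule mult_right_mono) simp
    qed
    also have "\<dots> \<le> r" using w T by (simp add: field_simps)
    finally show ?thesis using Kp(2) by (auto simp: dist_norm norm_minus_commute)
  qed
  have xj: "x j = c + X *\<^sub>R u j" using Xpos by (simp add: u_def X_def)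
  have vw: "v = w + m *\<^sub>R u j" by (simp add: w_def)
  have l1: "(1 - lm) * (T / (2 * (1 - lm))) = T / 2" using lam by (simp add: field_simps)
  have l2: "lm * X = T * m" using Xpos by (simp add: lm_def)
  have "(1 - lm) *\<^sub>R c2 + lm *\<^sub>R x j = c + ((1 - lm) * (T / (2 * (1 - lm)))) *\<^sub>R w + (lm * X) *\<^sub>R u j"
    by (simp add: c2_def xj algebra_simps)
  also have "\<dots> = c + (T / 2) *\<^sub>R w + (T * m) *\<^sub>R u j" by (simp only: l1 l2)
  also have "\<dots> = b"
  proof -
    have "(T / 2) *\<^sub>R w + (T / 2) *\<^sub>R w = T *\<^sub>R w" by (simp flip: scaleR_add_left)
    then show ?thesis by (simp add: b_def a_def vw algebra_simps)
  qed
  finally have b_eq: "b = (1 - lm) *\<^sub>R c2 + lm *\<^sub>R x j" by simp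
  have bK: "b \<in> K" unfolding b_eq using lam by (intro convexD[OF Kp(1) c2K K(2)]) auto
  obtain p and k :: int where p: "lattice_primitive L p" "k \<ge> 1" "v = of_int k *\<^sub>R p"
    using primitive_exists[OF L v(1,2)] by blast
  have p0: "p \<noteq> 0" using p by (simp add: lattice_primitive_def)
  have ba: "b - a = (T * of_int k) *\<^sub>R p" by (simp add: b_def p(3))
  have Tk: "T * of_int k > 0" using T p(2) by simp
  have "p = (1 / (T * of_int k)) *\<^sub>R (b - a)" using Tk T p(2) by (simp add: ba)
  then have "norm (b - a) / norm p \<in> dset L K"
    using Tk by (intro dsetI[OF aK bK p(1), of "1 / (T * of_int k)"]) auto
  moreover have "norm (b - a) / norm p = T * of_int k" using p0 Tk by (simp add: ba)
  ultimately have "T * of_int k \<le> lattice_diam L K"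
    unfolding diam_dset using cSup_upper dset_bdd[OF L Kp(3)] by metis
  moreover have "T \<le> T * of_int k" using T p(2) by simp
  ultimately show False using Kp(4) by (simp add: T_def)
qed



definition wset :: "'a::euclidean_space set \<Rightarrow> 'a \<Rightarrow> real set" where
  "wset K y = {y \<bullet> (a - b) | a b. a \<in> K \<and> b \<in> K}"

definition wdset :: "'a::euclidean_space set \<Rightarrow> 'a set \<Rightarrow> real set" where
  "wdset L K = {Sup (wset K y) | y. y \<in> dual_lattice L - {0}}"

lemma width_wdset: "lattice_width L K = Inf (wdset L K)"
  by (simp add: lattice_width_def wdset_def wset_def)

lemma wset_img: "wset K y = (\<lambda>z. y \<bullet> (fst z - snd z)) ` (K \<times> K)"
  unfolding wset_def by force

lemma wset_compact: "compact K \<Longrightarrow> compact (wset K y)"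
  unfolding wset_img
  by (intro compact_continuous_image compact_Times continuous_intros) auto

lemma wset_sup:
  assumes "compact K" "K \<noteq> {}"
  shows "Sup (wset K y) \<in> wset K y" "\<And>a b. a \<in> K \<Longrightarrow> b \<in> K \<Longrightarrow> y \<bullet> (a - b) \<le> Sup (wset K y)"
proof -
  have c: "compact (wset K y)" using assms(1) by (rule wset_compact)
  have ne: "wset K y \<noteq> {}" using assms(2) by (auto simp: wset_def)
  have bdd: "bdd_above (wset K y)" using c by (simp add: bounded_imp_bdd_above compact_imp_bounded)
  show "Sup (wset K y) \<in> wset K y" using closed_contains_Sup[OF ne bdd compact_imp_closed[OF c]] .
  show "y \<bullet> (a - b) \<le> Sup (wset K y)" if "a \<in> K" "b \<in> K" for a b
    using that by (intro cSup_upper[OF _ bdd]) (auto simp: wset_def)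
qed

lemma wsup_nonneg: "compact K \<Longrightarrow> K \<noteq> {} \<Longrightarrow> 0 \<le> Sup (wset K y)"
  using wset_sup(2)[of K _ _ y] by fastforce

lemma wsup_mono: "K \<subseteq> K' \<Longrightarrow> compact K \<Longrightarrow> K \<noteq> {} \<Longrightarrow> compact K' \<Longrightarrow> Sup (wset K y) \<le> Sup (wset K' y)"
proof -
  assume a: "K \<subseteq> K'" "compact K" "K \<noteq> {}" "compact K'"
  obtain z where "z \<in> wset K y" "z = Sup (wset K y)" using wset_sup(1)[OF a(2,3)] by blast
  then obtain p q where "p \<in> K" "q \<in> K" "Sup (wset K y) = y \<bullet> (p - q)" by (auto simp: wset_def)
  moreover have "K' \<noteq> {}" using a by auto
  ultimately show ?thesis using wset_sup(2)[OF a(4)] a(1) by auto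
qed

lemma span_UNIV_nonzero:
  fixes S :: "'a::euclidean_space set"
  assumes "span S = UNIV" obtains v where "v \<in> S" "v \<noteq> 0"
proof -
  obtain i :: 'a where i: "i \<in> Basis" using nonempty_Basis by blast
  have "\<not> S \<subseteq> {0}"
  proof
    assume "S \<subseteq> {0}"
    then have "span S \<subseteq> span {0}" by (rule span_mono)
    then have "i \<in> span {0}" using assms by auto
    then show False using i by (simp add: span_empty nonzero_Basis)
  qed
  then show ?thesis using that by blast
qed

lemma dual_nonzero:
  assumes L: "is_lattice L" obtains y where "y \<in> dual_lattice L" "y \<noteq> 0"
proof -
  obtain B' where B': "finite B'" "B' \<subseteq> dual_lattice L" "span B' = UNIV" by (rule dual_spanning[OF L])
  obtain v where "v \<in> B'" "v \<noteq> 0" by (rule span_UNIV_nonzero[OF B'(3)])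
  then show ?thesis using that B'(2) by blast
qed

lemma wdset_ne: "is_lattice L \<Longrightarrow> wdset L K \<noteq> {}"
  unfolding wdset_def using dual_nonzero by blast

lemma wdset_bdd: "compact K \<Longrightarrow> K \<noteq> {} \<Longrightarrow> bdd_below (wdset L K)"
  unfolding wdset_def bdd_below_def using wsup_nonneg by blast

lemma width_le:
  assumes "compact K" "K \<noteq> {}" "y \<in> dual_lattice L" "y \<noteq> 0"
  shows "lattice_width L K \<le> Sup (wset K y)"
proof -
  have "Sup (wset K y) \<in> wdset L K" using assms(3,4) by (auto simp: wdset_def)
  then show ?thesis unfolding width_wdset by (rule cInf_lower[OF _ wdset_bdd[OF assms(1,2)]])
qed

lemma width_mono:
  assumes L: "is_lattice L" and "K \<subseteq> K'" "compact K" "K \<noteq> {}" "compact K'"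
  shows "lattice_width L K \<le> lattice_width L K'"
  unfolding width_wdset
proof (rule cInf_mono[OF wdset_ne[OF L] wdset_bdd[OF assms(3,4)]])
  fix b assume "b \<in> wdset L K'"
  then obtain y where y: "y \<in> dual_lattice L - {0}" "b = Sup (wset K' y)" by (auto simp: wdset_def)
  have "Sup (wset K y) \<in> wdset L K" using y(1) by (auto simp: wdset_def)
  moreover have "Sup (wset K y) \<le> b" using wsup_mono[OF assms(2-5)] y(2) by simp
  ultimately show "\<exists>a\<in>wdset L K. a \<le> b" by blast
qed

lemma dual_norm_lower:
  assumes L: "is_lattice L"
  obtains d where "d > 0" "\<And>y. y \<in> dual_lattice L \<Longrightarrow> y \<noteq> 0 \<Longrightarrow> d \<le> norm y"
proof -
  obtain B where B: "finite B" "B \<subseteq> L" "independent B" "span B = UNIV" by (rule lat_basis[OF L])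
  define S where "S = (\<Sum>b\<in>B. norm b)"
  have S0: "S \<ge> 0" unfolding S_def by (simp add: sum_nonneg)
  have low: "1 / (S + 1) \<le> norm y" if y: "y \<in> dual_lattice L" "y \<noteq> 0" for y
  proof -
    have "\<exists>b\<in>B. b \<bullet> y \<noteq> 0"
    proof (rule ccontr)
      assume "\<not> ?thesis"
      then have "orthogonal x y" if "x \<in> B" for x using that by (auto simp: orthogonal_def)
      then have "orthogonal y y" using orthogonal_to_span[of y B y] B(4) by (auto simp: orthogonal_commute)
      then show False using y(2) by (simp add: orthogonal_def)
    qed
    then obtain b where b: "b \<in> B" "b \<bullet> y \<noteq> 0" by blast
    have "b \<bullet> y \<in> \<int>" using y(1) b(1) B(2) by (auto simp: dual_lattice_def)
    then have "1 \<le> \<bar>b \<bullet> y\<bar>" using b(2) by (rule Ints_nonzero_abs_ge1)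
    also have "\<dots> \<le> norm b * norm y" by (rule Cauchy_Schwarz_ineq2)
    also have "\<dots> \<le> S * norm y" unfolding S_def
      by (rule mult_right_mono[OF member_le_sum[OF b(1)]]) (auto simp: B(1))
    also have "\<dots> \<le> (S + 1) * norm y" by (simp add: mult_right_mono)
    finally show ?thesis using S0 by (simp add: field_simps)
  qed
  have pos: "1 / (S + 1) > 0" using S0 by simp
  show ?thesis by (rule that[OF pos low])
qed

lemma width_pos:
  assumes L: "is_lattice L" and K: "cball c r \<subseteq> K" "r > 0" "compact K"
  shows "lattice_width L K > 0"
proof -
  obtain d where d: "d > 0" "\<And>y. y \<in> dual_lattice L \<Longrightarrow> y \<noteq> 0 \<Longrightarrow> d \<le> norm y"
    using dual_norm_lower[OF L] by blast
  have Kne: "K \<noteq> {}" using K by auto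
  have "2 * r * d \<le> lattice_width L K"
    unfolding width_wdset
  proof (rule cInf_greatest[OF wdset_ne[OF L]])
    fix z assume "z \<in> wdset L K"
    then obtain y where y: "y \<in> dual_lattice L" "y \<noteq> 0" "z = Sup (wset K y)" by (auto simp: wdset_def)
    define a where "a = c + (r / norm y) *\<^sub>R y"
    define b where "b = c - (r / norm y) *\<^sub>R y"
    have ab: "a \<in> K" "b \<in> K" using K y(2) by (auto simp: a_def b_def dist_norm intro!: subsetD[OF K(1)])
    have "y \<bullet> (a - b) = 2 * r * norm y"
    proof -
      have "y \<bullet> (a - b) = r / norm y * (y \<bullet> y) + r / norm y * (y \<bullet> y)"
        by (simp add: a_def b_def inner_add_right)
      also have "y \<bullet> y = norm y * norm y" by (simp add: dot_square_norm power2_eq_square)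
      finally show ?thesis using y(2) by (simp add: field_simps)
    qed
    moreover have "2 * r * d \<le> 2 * r * norm y" using d(2)[OF y(1,2)] K(2) by simp
    ultimately show "2 * r * d \<le> z" using wset_sup(2)[OF K(3) Kne ab, of y] y(3) by linarith
  qed
  moreover have "2 * r * d > 0" using K(2) d(1) by simp
  ultimately show ?thesis by linarith
qed


lemma chain_inter:
  assumes L: "is_lattice L" and ne: "\<C> \<noteq> {}"
    and ch: "\<And>X Y. X \<in> \<C> \<Longrightarrow> Y \<in> \<C> \<Longrightarrow> X \<subseteq> Y \<or> Y \<subseteq> X"
    and bodies: "\<And>M. M \<in> \<C> \<Longrightarrow> convex_body M \<and> lattice_width L M = w"
    and w: "w > 0"
  shows "convex_body (\<Inter>\<C>) \<and> lattice_width L (\<Inter>\<C>) = w"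
proof -
  obtain M0 where M0: "M0 \<in> \<C>" using ne by blast
  have cb: "compact M" "convex M" "M \<noteq> {}" "lattice_width L M = w" if "M \<in> \<C>" for M
    using bodies[OF that] by (auto simp: convex_body_def)
  define MI where "MI = \<Inter>\<C>"
  have MIsub: "MI \<subseteq> M" if "M \<in> \<C>" for M using that by (auto simp: MI_def)
  have clo: "closed MI" unfolding MI_def using cb(1) by (intro closed_Inter) (auto intro: compact_imp_closed)
  have cpt: "compact MI"
    using clo bounded_subset[OF compact_imp_bounded[OF cb(1)[OF M0]] MIsub[OF M0]]
    by (simp add: compact_eq_bounded_closed)
  have cvx: "convex MI" unfolding MI_def using cb(2) by (intro convex_Inter) auto
  have wide: "\<exists>a\<in>MI. \<exists>b\<in>MI. w \<le> y \<bullet> (a - b)" if y: "y \<in> dual_lattice L" "y \<noteq> 0" for y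
  proof -
    define S where "S M = {z \<in> M \<times> M. w \<le> y \<bullet> (fst z - snd z)}" for M
    have Sne: "S M \<noteq> {}" if MC: "M \<in> \<C>" for M
    proof -
      obtain z where z: "z \<in> wset M y" "z = Sup (wset M y)" using wset_sup(1)[OF cb(1,3)[OF MC]] by blast
      then obtain a b where ab: "a \<in> M" "b \<in> M" "z = y \<bullet> (a - b)" by (auto simp: wset_def)
      have "w \<le> z" using width_le[OF cb(1,3)[OF MC] y] cb(4)[OF MC] z(2) by simp
      then have "(a, b) \<in> S M" using ab by (simp add: S_def)
      then show ?thesis by blast
    qed
    have Sclo: "closed (S M)" if "M \<in> \<C>" for M
    proof -
      have "S M = (M \<times> M) \<inter> {z. w \<le> y \<bullet> (fst z - snd z)}" by (auto simp: S_def)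
      moreover have "closed (M \<times> M)" using cb(1)[OF that] by (intro closed_Times compact_imp_closed)
      moreover have "closed {z::'a \<times> 'a. w \<le> y \<bullet> (fst z - snd z)}"
        by (intro closed_Collect_le continuous_intros)
      ultimately show ?thesis by (simp add: closed_Int)
    qed
    have "\<Inter>(S ` \<C>) \<noteq> {}"
    proof (rule bounded_closed_chain[of "S M0"])
      show "S M0 \<in> S ` \<C>" using M0 by blast
      show "bounded (S M0)"
        by (rule bounded_subset[of "M0 \<times> M0"]) (auto simp: S_def intro!: bounded_Times compact_imp_bounded[OF cb(1)[OF M0]])
      show "\<And>T. T \<in> S ` \<C> \<Longrightarrow> closed T" using Sclo by blast
      show "{} \<notin> S ` \<C>" using Sne by auto
      show "\<And>T T'. T \<in> S ` \<C> \<and> T' \<in> S ` \<C> \<Longrightarrow> T \<subseteq> T' \<or> T' \<subseteq> T"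
      proof -
        fix T T' assume "T \<in> S ` \<C> \<and> T' \<in> S ` \<C>"
        then obtain X Y where XY: "X \<in> \<C>" "Y \<in> \<C>" "T = S X" "T' = S Y" by blast
        have mono: "S X \<subseteq> S Y" if "X \<subseteq> Y" for X Y using that by (auto simp: S_def)
        show "T \<subseteq> T' \<or> T' \<subseteq> T" using ch[OF XY(1,2)] mono XY(3,4) by blast
      qed
    qed
    then obtain z where z: "z \<in> \<Inter>(S ` \<C>)" by blast
    have "fst z \<in> MI" "snd z \<in> MI" "w \<le> y \<bullet> (fst z - snd z)"
      using z M0 by (auto simp: MI_def S_def)
    then show ?thesis by blast
  qed
  obtain y0 where y0: "y0 \<in> dual_lattice L" "y0 \<noteq> 0" by (rule dual_nonzero[OF L])
  have MIne: "MI \<noteq> {}" using wide[OF y0] by blast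
  have wMI: "lattice_width L MI = w"
  proof (rule antisym)
    show "lattice_width L MI \<le> w"
      using width_mono[OF L MIsub[OF M0] cpt MIne cb(1)[OF M0]] cb(4)[OF M0] by simp
    show "w \<le> lattice_width L MI"
      unfolding width_wdset
    proof (rule cInf_greatest[OF wdset_ne[OF L]])
      fix z assume "z \<in> wdset L MI"
      then obtain y where y: "y \<in> dual_lattice L" "y \<noteq> 0" "z = Sup (wset MI y)" by (auto simp: wdset_def)
      obtain a b where ab: "a \<in> MI" "b \<in> MI" "w \<le> y \<bullet> (a - b)" using wide[OF y(1,2)] by blast
      show "w \<le> z" using wset_sup(2)[OF cpt MIne ab(1,2), of y] ab(3) y(3) by linarith
    qed
  qed
  have intne: "interior MI \<noteq> {}"
  proof
    assume "interior MI = {}"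
    then obtain a0 \<beta> where a0: "a0 \<noteq> 0" "MI \<subseteq> {x. a0 \<bullet> x = \<beta>}"
      using empty_interior_subset_hyperplane[OF cvx] by metis
    obtain R where R: "\<And>x. x \<in> MI \<Longrightarrow> norm x \<le> R" using compact_imp_bounded[OF cpt] bounded_iff by blast
    have R0: "R \<ge> 0" using MIne R norm_ge_zero order_trans by blast
    obtain B' where B': "finite B'" "B' \<subseteq> dual_lattice L" "span B' = UNIV" by (rule dual_spanning[OF L])
    define \<epsilon> where "\<epsilon> = w / (2 * R + 1)"
    have \<epsilon>: "\<epsilon> > 0" using w R0 by (simp add: \<epsilon>_def)
    have "\<exists>v\<in>dual_lattice L. v \<noteq> 0 \<and> (\<exists>m::real. m > 0 \<and> norm (v - m *\<^sub>R a0) < \<epsilon>)"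
      by (rule dirichlet[OF dual_addgrp B' \<epsilon> a0(1)])
    then obtain y m where y: "y \<in> dual_lattice L" "y \<noteq> 0" "norm (y - m *\<^sub>R a0) < \<epsilon>" by blast
    obtain a b where ab: "a \<in> MI" "b \<in> MI" "w \<le> y \<bullet> (a - b)" using wide[OF y(1,2)] by blast
    have "a0 \<bullet> a = \<beta>" "a0 \<bullet> b = \<beta>" using ab a0(2) by auto
    then have "y \<bullet> (a - b) = (y - m *\<^sub>R a0) \<bullet> (a - b)" by (simp add: inner_diff_left inner_diff_right)
    also have "\<dots> \<le> norm (y - m *\<^sub>R a0) * norm (a - b)" by (rule norm_cauchy_schwarz)
    also have "\<dots> \<le> \<epsilon> * (2 * R)"
    proof (rule mult_mono)
      show "norm (y - m *\<^sub>R a0) \<le> \<epsilon>" using y(3) by simp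
      show "norm (a - b) \<le> 2 * R" using R[OF ab(1)] R[OF ab(2)] norm_triangle_ineq4[of a b] by simp
    qed (use \<epsilon> in auto)
    also have "\<dots> < w" using w R0 by (simp add: \<epsilon>_def field_simps)
    finally show False using ab(3) by simp
  qed
  show ?thesis using cpt cvx intne wMI by (simp add: convex_body_def MI_def)
qed


lemma diam_nonneg:
  assumes L: "is_lattice L" and K: "cball c r \<subseteq> K" "r > 0" "bounded K"
  shows "lattice_diam L K \<ge> 0"
proof -
  obtain q where q: "q \<in> dset L K" using dset_ne[OF L K(1,2)] by blast
  have "q \<le> lattice_diam L K" unfolding diam_dset by (rule cSup_upper[OF q dset_bdd[OF L K(3)]])
  then show ?thesis using dset_nonneg[OF q] by linarith
qed

lemma subset_Zorn_rev:
  assumes "\<And>\<C>. subset.chain A \<C> \<Longrightarrow> \<exists>L\<in>A. \<forall>X\<in>\<C>. L \<subseteq> X"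
  shows "\<exists>M\<in>A. \<forall>X\<in>A. X \<subseteq> M \<longrightarrow> X = M"
proof -
  have "\<exists>M\<in>uminus ` A. \<forall>X\<in>uminus ` A. M \<subseteq> X \<longrightarrow> X = M"
  proof (rule subset_Zorn)
    fix \<C> assume ch: "subset.chain (uminus ` A) \<C>"
    have chs1: "\<C> \<subseteq> uminus ` A" using ch unfolding subset_chain_def by blast
    have chs2: "\<And>X Y. X \<in> \<C> \<Longrightarrow> Y \<in> \<C> \<Longrightarrow> X \<subseteq> Y \<or> Y \<subseteq> X"
      using ch unfolding subset_chain_def by blast
    have "uminus ` \<C> \<subseteq> A"
    proof
      fix Z assume "Z \<in> uminus ` \<C>"
      then obtain X where X: "X \<in> \<C>" "Z = - X" by blast
      then obtain Y where "Y \<in> A" "X = - Y" using chs1 by blast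
      then show "Z \<in> A" using X(2) by simp
    qed
    moreover have "\<forall>X\<in>uminus ` \<C>. \<forall>Y\<in>uminus ` \<C>. X \<subseteq> Y \<or> Y \<subseteq> X"
    proof (intro ballI)
      fix X Y assume "X \<in> uminus ` \<C>" "Y \<in> uminus ` \<C>"
      then obtain X' Y' where "X' \<in> \<C>" "Y' \<in> \<C>" "X = - X'" "Y = - Y'" by blast
      then show "X \<subseteq> Y \<or> Y \<subseteq> X" using chs2[of X' Y'] by auto
    qed
    ultimately have "subset.chain A (uminus ` \<C>)" unfolding subset_chain_def by blast
    then obtain L where L: "L \<in> A" "\<forall>X\<in>uminus ` \<C>. L \<subseteq> X" using assms by blast
    have "- L \<in> uminus ` A" using L(1) by (rule imageI)
    moreover have "\<forall>X\<in>\<C>. X \<subseteq> - L"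
    proof
      fix X assume "X \<in> \<C>"
      then have "- X \<in> uminus ` \<C>" by (rule imageI)
      with L(2) have "L \<subseteq> - X" by (rule bspec)
      then show "X \<subseteq> - L" by auto
    qed
    ultimately show "\<exists>U\<in>uminus ` A. \<forall>X\<in>\<C>. X \<subseteq> U" by blast
  qed
  then obtain M where M: "M \<in> uminus ` A" "\<forall>X\<in>uminus ` A. M \<subseteq> X \<longrightarrow> X = M" by blast
  have "- M \<in> A" using M(1) by auto
  moreover have "\<forall>X\<in>A. X \<subseteq> - M \<longrightarrow> X = - M"
  proof (intro ballI impI)
    fix X assume "X \<in> A" "X \<subseteq> - M"
    then have "- X \<in> uminus ` A" "M \<subseteq> - X" by auto
    then have "- X = M" using M(2) by blast
    then show "X = - M" by auto
  qed
  ultimately show ?thesis by blast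
qed

lemma chain_union:
  assumes L: "is_lattice L" and ne: "\<C> \<noteq> {}"
    and ch: "\<And>X Y. X \<in> \<C> \<Longrightarrow> Y \<in> \<C> \<Longrightarrow> X \<subseteq> Y \<or> Y \<subseteq> X"
    and bodies: "\<And>M. M \<in> \<C> \<Longrightarrow> convex_body M \<and> lattice_diam L M = D \<and> cball c r \<subseteq> M"
    and r: "r > 0"
  shows "convex_body (closure (\<Union>\<C>)) \<and> lattice_diam L (closure (\<Union>\<C>)) = D"
proof -
  obtain M0 where M0: "M0 \<in> \<C>" using ne by blast
  have cb: "compact M" "convex M" "lattice_diam L M = D" "cball c r \<subseteq> M" if "M \<in> \<C>" for M
    using bodies[OF that] by (auto simp: convex_body_def)
  have D0: "D \<ge> 0" using diam_nonneg[OF L cb(4)[OF M0] r compact_imp_bounded[OF cb(1)[OF M0]]] cb(3)[OF M0] by simp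
  define U where "U = \<Union>\<C>"
  have bU: "bounded U" unfolding U_def
  proof (rule chain_bounded[OF L r D0])
    fix K assume KC: "K \<in> \<C>"
    show "convex K \<and> cball c r \<subseteq> K \<and> bounded K \<and> lattice_diam L K \<le> D"
      using cb[OF KC] compact_imp_bounded[OF cb(1)[OF KC]] by simp
  qed
  have big: "\<exists>M\<in>\<C>. x \<in> M \<and> y \<in> M" if xyU: "x \<in> U" "y \<in> U" for x y
  proof -
    obtain X Y where XY: "X \<in> \<C>" "Y \<in> \<C>" "x \<in> X" "y \<in> Y" using xyU by (auto simp: U_def)
    show ?thesis using ch[OF XY(1,2)] XY by blast
  qed
  have cU: "convex U"
  proof (rule convexI)
    fix x y and u v :: real assume xy: "x \<in> U" "y \<in> U" and uv0: "0 \<le> u" "0 \<le> v" "u + v = 1"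
    have uv: "0 \<le> u \<and> 0 \<le> v \<and> u + v = 1" using uv0 by simp
    obtain M where M: "M \<in> \<C>" "x \<in> M" "y \<in> M" using big[OF xy] by blast
    have "u *\<^sub>R x + v *\<^sub>R y \<in> M" using uv by (intro convexD[OF cb(2)[OF M(1)] M(2,3)]) auto
    then show "u *\<^sub>R x + v *\<^sub>R y \<in> U" using M(1) by (auto simp: U_def)
  qed
  define K where "K = closure U"
  have ballU: "cball c r \<subseteq> U" using cb(4)[OF M0] M0 by (auto simp: U_def)
  have cint: "c \<in> interior U"
  proof -
    have "c \<in> interior (cball c r)" using r by simp
    then show ?thesis using interior_mono[OF ballU] by blast
  qed
  have Kc: "compact K" unfolding K_def using bU by (simp add: compact_closure)
  have Kcv: "convex K" unfolding K_def using cU by (rule convex_closure)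
  have UK: "U \<subseteq> K" unfolding K_def by (rule closure_subset)
  have Kint: "interior K \<noteq> {}" using interior_mono[OF UK] cint by blast
  have ballK: "cball c r \<subseteq> K" using ballU UK by blast
  have dge: "D \<le> lattice_diam L K"
  proof -
    have "lattice_diam L M0 \<le> lattice_diam L K"
      by (rule diam_mono[OF L _ dset_ne[OF L cb(4)[OF M0] r] compact_imp_bounded[OF Kc]]) (use M0 UK in \<open>auto simp: U_def\<close>)
    then show ?thesis using cb(3)[OF M0] by simp
  qed
  have dle: "lattice_diam L K \<le> D"
    unfolding diam_dset
  proof (rule cSup_least[OF dset_ne[OF L ballK r]])
    fix q assume "q \<in> dset L K"
    then obtain a b v t where abv: "q = norm (b - a) / norm v" "a \<in> K" "b \<in> K" "lattice_primitive L v"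
        "t > 0" "v = t *\<^sub>R (b - a)"
      unfolding dset_def by blast
    have v0: "v \<noteq> 0" using abv(4) by (simp add: lattice_primitive_def)
    have shrink: "(1 - e) * q \<le> D" if e: "0 < e" "e < 1" for e
    proof -
      define a' where "a' = a - e *\<^sub>R (a - c)"
      define b' where "b' = b - e *\<^sub>R (b - c)"
      have "a' \<in> interior U" unfolding a'_def
        using mem_interior_closure_convex_shrink[OF cU cint, of a e] abv(2) e by (simp add: K_def)
      moreover have "b' \<in> interior U" unfolding b'_def
        using mem_interior_closure_convex_shrink[OF cU cint, of b e] abv(3) e by (simp add: K_def)
      ultimately have "a' \<in> U" "b' \<in> U" using interior_subset by blast+
      then obtain M where M: "M \<in> \<C>" "a' \<in> M" "b' \<in> M" using big by blast
      have ba': "b' - a' = (1 - e) *\<^sub>R (b - a)" by (simp add: a'_def b'_def algebra_simps)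
      have "v = (t / (1 - e)) *\<^sub>R (b' - a')" using e by (simp add: ba' abv(6))
      then have "norm (b' - a') / norm v \<in> dset L M"
        using abv(5) e by (intro dsetI[OF M(2,3) abv(4), of "t / (1 - e)"]) auto
      then have "norm (b' - a') / norm v \<le> lattice_diam L M"
        unfolding diam_dset by (rule cSup_upper[OF _ dset_bdd[OF L compact_imp_bounded[OF cb(1)[OF M(1)]]]])
      moreover have "norm (b' - a') / norm v = (1 - e) * q" using e by (simp add: ba' abv(1))
      ultimately show ?thesis using cb(3)[OF M(1)] by simp
    qed
    show "q \<le> D"
    proof (rule ccontr)
      assume "\<not> q \<le> D"
      then have qD: "q > D" by simp
      define e where "e = (q - D) / (2 * q)"
      have e: "0 < e" "e < 1" using qD D0 by (auto simp: e_def field_simps)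
      have "(1 - e) * q = (q + D) / 2" using qD D0 by (simp add: e_def field_simps)
      then show False using shrink[OF e] qD by simp
    qed
  qed
  show ?thesis using Kc Kcv Kint dge dle by (simp add: convex_body_def K_def U_def)
qed


theorem theorem3p20:
  fixes C L :: "'a::euclidean_space set"
  assumes "convex_body C" and "is_lattice L"
  shows "(\<exists>K. convex_body K \<and> C \<subseteq> K \<and> lattice_complete L K
              \<and> lattice_diam L K = lattice_diam L C)
       \<and> (\<exists>M. convex_body M \<and> M \<subseteq> C \<and> lattice_reduced L M
              \<and> lattice_width L M = lattice_width L C)"
proof -
  note L = assms(2)
  have Cc: "compact C" "convex C" "interior C \<noteq> {}" using assms(1) by (auto simp: convex_body_def)
  obtain c where c: "c \<in> interior C" using Cc(3) by blast
  obtain r where r: "r > 0" "cball c r \<subseteq> C"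
    using c open_interior[of C] open_contains_cball interior_subset by (metis subset_trans)
  define D where "D = lattice_diam L C"
  define A1 where "A1 = {K. convex_body K \<and> C \<subseteq> K \<and> lattice_diam L K = D}"
  have CA1: "C \<in> A1" using assms(1) by (simp add: A1_def D_def)
  have "\<exists>K\<in>A1. \<forall>X\<in>A1. K \<subseteq> X \<longrightarrow> X = K"
  proof (rule subset_Zorn)
    fix \<C> assume ch: "subset.chain A1 \<C>"
    have chs1: "\<C> \<subseteq> A1" using ch unfolding subset_chain_def by blast
    have chs2: "\<And>X Y. X \<in> \<C> \<Longrightarrow> Y \<in> \<C> \<Longrightarrow> X \<subseteq> Y \<or> Y \<subseteq> X"
      using ch unfolding subset_chain_def by blast
    define \<C>' where "\<C>' = insert C \<C>"
    have mem: "M \<in> A1" if "M \<in> \<C>'" for M using that chs1 CA1 by (auto simp: \<C>'_def)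
    have "convex_body (closure (\<Union>\<C>')) \<and> lattice_diam L (closure (\<Union>\<C>')) = D"
    proof (rule chain_union[OF L _ _ _ r(1)])
      show "\<C>' \<noteq> {}" by (simp add: \<C>'_def)
      show "X \<subseteq> Y \<or> Y \<subseteq> X" if XY: "X \<in> \<C>'" "Y \<in> \<C>'" for X Y
      proof -
        have "C \<subseteq> X" "C \<subseteq> Y" using mem[OF XY(1)] mem[OF XY(2)] by (simp_all add: A1_def)
        then show ?thesis using XY chs2 unfolding \<C>'_def by blast
      qed
      show "convex_body M \<and> lattice_diam L M = D \<and> cball c r \<subseteq> M" if "M \<in> \<C>'" for M
        using mem[OF that] r(2) by (auto simp: A1_def)
    qed
    moreover have "C \<subseteq> closure (\<Union>\<C>')" using closure_subset by (auto simp: \<C>'_def)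
    ultimately have "closure (\<Union>\<C>') \<in> A1" by (simp add: A1_def)
    moreover have "\<forall>X\<in>\<C>. X \<subseteq> closure (\<Union>\<C>')"
    proof
      fix X assume "X \<in> \<C>"
      then have "X \<subseteq> \<Union>\<C>'" by (auto simp: \<C>'_def)
      then show "X \<subseteq> closure (\<Union>\<C>')" using closure_subset by blast
    qed
    ultimately show "\<exists>U\<in>A1. \<forall>X\<in>\<C>. X \<subseteq> U" by blast
  qed
  then obtain K where K: "K \<in> A1" "\<forall>X\<in>A1. K \<subseteq> X \<longrightarrow> X = K" by blast
  have part1: "convex_body K \<and> C \<subseteq> K \<and> lattice_complete L K \<and> lattice_diam L K = lattice_diam L C"
  proof -
    have "lattice_complete L K"
      unfolding lattice_complete_def
    proof
      assume "\<exists>C'. convex_body C' \<and> K \<subset> C' \<and> lattice_diam L C' = lattice_diam L K"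
      then obtain C' where C': "convex_body C'" "K \<subset> C'" "lattice_diam L C' = lattice_diam L K" by blast
      have "C' \<in> A1" using C' K(1) by (auto simp: A1_def)
      then have "C' = K" using K(2) C'(2) by blast
      then show False using C'(2) by simp
    qed
    then show ?thesis using K(1) by (simp add: A1_def D_def)
  qed
  define w where "w = lattice_width L C"
  have w: "w > 0" unfolding w_def by (rule width_pos[OF L r(2) r(1) Cc(1)])
  define A2 where "A2 = {M. convex_body M \<and> M \<subseteq> C \<and> lattice_width L M = w}"
  have CA2: "C \<in> A2" using assms(1) by (simp add: A2_def w_def)
  have "\<exists>M\<in>A2. \<forall>X\<in>A2. X \<subseteq> M \<longrightarrow> X = M"
  proof (rule subset_Zorn_rev)
    fix \<C> assume ch: "subset.chain A2 \<C>"
    have chs1: "\<C> \<subseteq> A2" using ch unfolding subset_chain_def by blast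
    have chs2: "\<And>X Y. X \<in> \<C> \<Longrightarrow> Y \<in> \<C> \<Longrightarrow> X \<subseteq> Y \<or> Y \<subseteq> X"
      using ch unfolding subset_chain_def by blast
    define \<C>' where "\<C>' = insert C \<C>"
    have mem: "M \<in> A2" if "M \<in> \<C>'" for M using that chs1 CA2 by (auto simp: \<C>'_def)
    have "convex_body (\<Inter>\<C>') \<and> lattice_width L (\<Inter>\<C>') = w"
    proof (rule chain_inter[OF L _ _ _ w])
      show "\<C>' \<noteq> {}" by (simp add: \<C>'_def)
      show "X \<subseteq> Y \<or> Y \<subseteq> X" if XY: "X \<in> \<C>'" "Y \<in> \<C>'" for X Y
      proof -
        have "X \<subseteq> C" "Y \<subseteq> C" using mem[OF XY(1)] mem[OF XY(2)] by (simp_all add: A2_def)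
        then show ?thesis using XY chs2 unfolding \<C>'_def by blast
      qed
      show "convex_body M \<and> lattice_width L M = w" if "M \<in> \<C>'" for M
        using mem[OF that] by (auto simp: A2_def)
    qed
    moreover have "\<Inter>\<C>' \<subseteq> C" by (auto simp: \<C>'_def)
    ultimately have "\<Inter>\<C>' \<in> A2" by (simp add: A2_def)
    moreover have "\<forall>X\<in>\<C>. \<Inter>\<C>' \<subseteq> X" by (auto simp: \<C>'_def)
    ultimately show "\<exists>U\<in>A2. \<forall>X\<in>\<C>. U \<subseteq> X" by blast
  qed
  then obtain M where M: "M \<in> A2" "\<forall>X\<in>A2. X \<subseteq> M \<longrightarrow> X = M" by blast
  have part2: "convex_body M \<and> M \<subseteq> C \<and> lattice_reduced L M \<and> lattice_width L M = lattice_width L C"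
  proof -
    have "lattice_reduced L M"
      unfolding lattice_reduced_def
    proof
      assume "\<exists>C'. convex_body C' \<and> C' \<subset> M \<and> lattice_width L C' = lattice_width L M"
      then obtain C' where C': "convex_body C'" "C' \<subset> M" "lattice_width L C' = lattice_width L M" by blast
      have "C' \<in> A2" using C' M(1) by (auto simp: A2_def)
      then have "C' = M" using M(2) C'(2) by blast
      then show False using C'(2) by simp
    qed
    then show ?thesis using M(1) by (simp add: A2_def w_def)
  qed
  show ?thesis using part1 part2 by blast
qed

end
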